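(* Let $\mathbb{K}$ be a field with $\operatorname{char}(\mathbb{K})\neq 2$, let $d\geq 2$ and $\mathcal{R}=M_d(\mathbb{K})$, the ring of $d\times d$ matrices over $\mathbb{K}$, and let $f(\chi_1,\ldots,\chi_n)$ be a multilinear polynomial over $\mathbb{K}$ which is not central-valued on $\mathcal{R}$. Let $a_1,\ldots,a_6\in\mathcal{R}$ be such that $$a_1f(\zeta)^2+a_2f(\zeta)a_3f(\zeta)+f(\zeta)a_5f(\zeta)a_6+f(\zeta)a_4f(\zeta)-a_5f(\zeta)^2a_6=0$$ for all $\zeta=(\zeta_1,\ldots,\zeta_n)\in\mathcal{R}^n$. Then one of the following holds: (1) $a_2,a_5\in\mathbb{K}\cdot I_d$; (2) $a_2,a_6\in\mathbb{K}\cdot I_d$; (3) $a_3,a_5\in\mathbb{K}\cdot I_d$; (4) $a_3,a_6\in\mathbb{K}\cdot I_d$.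
   Context: A multilinear polynomial over $\mathbb{K}$ is a noncommutative polynomial in which each variable appears exactly once in every monomial; it is non-central if not all its values on $\mathcal{R}$ are scalar matrices. $I_d$ is the identity matrix. (The paper writes $a_i\in\mathcal{U}$, the Utumi quotient ring, which for $M_d(\mathbb{K})$ coincides with $M_d(\mathbb{K})$.) *)

theory Defs
  imports "HOL-Analysis.Analysis" "HOL-Combinatorics.Permutations"
begin

text \<open>A multilinear noncommutative polynomial f(x_0,...,x_{n-1}) over the field 'a is
  f = sum over permutations s of {0..<n} of c(s) * x_{s 0} x_{s 1} ... x_{s (n-1)}.
  It is represented by its coefficient function c on permutations.\<close>

definition ordered_prod :: "nat \<Rightarrow> (nat \<Rightarrow> nat) \<Rightarrow> (nat \<Rightarrow> 'a::field^'d^'d) \<Rightarrow> 'a^'d^'d" where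
  "ordered_prod n s \<zeta> = foldr (**) (map (\<lambda>i. \<zeta> (s i)) [0..<n]) (mat 1)"

definition mlpoly_eval :: "nat \<Rightarrow> ((nat \<Rightarrow> nat) \<Rightarrow> 'a::field) \<Rightarrow> (nat \<Rightarrow> 'a^'d^'d) \<Rightarrow> 'a^'d^'d" where
  "mlpoly_eval n c \<zeta> = (\<Sum>s\<in>{s. s permutes {0..<n}}. mat (c s) ** ordered_prod n s \<zeta>)"

definition scalar_matrix :: "'a::field^'d^'d \<Rightarrow> bool" where
  "scalar_matrix A \<longleftrightarrow> (\<exists>k. A = mat k)"

definition central_valued :: "nat \<Rightarrow> ((nat \<Rightarrow> nat) \<Rightarrow> 'a::field) \<Rightarrow> 'd::finite itself \<Rightarrow> bool" where
  "central_valued n c _ \<longleftrightarrow> (\<forall>\<zeta> :: nat \<Rightarrow> 'a^'d^'d. scalar_matrix (mlpoly_eval n c \<zeta>))"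

end

theory Submission
  imports Defs
begin


lemma mm_add_r: "((A::'a::semiring_1^'n^'m) + B) ** C = A ** C + B ** C"
  by (vector matrix_matrix_mult_def sum.distrib[symmetric] field_simps)
lemma mm_diff_l: "(A::'a::ring_1^'n^'m) ** (B - C) = A ** B - A ** C"
  by (vector matrix_matrix_mult_def sum_subtractf[symmetric] field_simps)
lemma mm_diff_r: "((A::'a::ring_1^'n^'m) - B) ** C = A ** C - B ** C"
  by (vector matrix_matrix_mult_def sum_subtractf[symmetric] field_simps)
definition msc :: "'a::semiring_1 \<Rightarrow> 'a^'n^'m \<Rightarrow> 'a^'n^'m" where
  "msc k A = (\<chi> i j. k * A$i$j)"
lemma msc_nth[simp]: "msc k A $ i $ j = k * A $ i $ j"
  by (simp add: msc_def)
lemma mm_smul_l: "(msc k (A::'a::comm_semiring_1^'n^'m)) ** B = msc k (A ** B)"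
  by (vector matrix_matrix_mult_def sum_distrib_left mult_ac msc_def)
lemma mm_smul_r: "(A::'a::comm_semiring_1^'n^'m) ** (msc k B) = msc k (A ** B)"
  by (vector matrix_matrix_mult_def sum_distrib_left mult_ac msc_def)
lemma mat_mm_l: "mat k ** (A::'a::comm_semiring_1^'n^'m) = msc k A"
  by (simp add: vec_eq_iff matrix_matrix_mult_def mat_def msc_def if_distrib if_distribR sum.delta' cong: if_cong)
lemma mat_mm_r: "(A::'a::comm_semiring_1^'n^'m) ** mat k = msc k A"
  by (simp add: vec_eq_iff matrix_matrix_mult_def mat_def msc_def if_distrib if_distribR sum.delta' mult.commute cong: if_cong)
lemma mm_sum_l: "(sum f S) ** (B::'a::semiring_1^'n^'m) = (\<Sum>x\<in>S. f x ** B)"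
  by (induction S rule: infinite_finite_induct) (auto simp: mm_add_r)
lemma mm_sum_r: "(A::'a::semiring_1^'n^'m) ** (sum f S) = (\<Sum>x\<in>S. A ** f x)"
  by (induction S rule: infinite_finite_induct) (auto simp: matrix_add_ldistrib)
lemma msc_sum: "msc k (sum f S) = (\<Sum>x\<in>S. msc k (f x :: 'a::semiring_1^'n^'m))"
  by (induction S rule: infinite_finite_induct) (auto simp: vec_eq_iff distrib_left)
lemma msc_add: "msc k ((A::'a::semiring_1^'n^'m) + B) = msc k A + msc k B"
  by (simp add: vec_eq_iff field_simps)
lemma msc_diff: "msc k ((A::'a::ring_1^'n^'m) - B) = msc k A - msc k B"
  by (simp add: vec_eq_iff field_simps)
lemma msc_msc: "msc k (msc l (A::'a::semiring_1^'n^'m)) = msc (k * l) A"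
  by (simp add: vec_eq_iff field_simps)
lemma msc_one[simp]: "msc 1 (A::'a::semiring_1^'n^'m) = A"
  by (simp add: vec_eq_iff)
lemma msc_zero[simp]: "msc 0 (A::'a::semiring_1^'n^'m) = 0" "msc k (0::'a::semiring_1^'n^'m) = 0"
  by (simp_all add: vec_eq_iff)
lemma msc_addk: "msc (k + l) (A::'a::semiring_1^'n^'m) = msc k A + msc l A"
  by (simp add: vec_eq_iff field_simps)

definition lprod :: "('a::semiring_1^'d^'d) list \<Rightarrow> 'a^'d^'d" where
  "lprod xs = foldr (**) xs (mat 1)"

lemma lprod_simps[simp]: "lprod [] = mat 1" "lprod (x # xs) = x ** lprod xs"
  by (auto simp: lprod_def)

lemma lprod_append: "lprod (xs @ ys) = lprod xs ** lprod ys"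
  by (induction xs) (auto simp: matrix_mul_assoc)

lemma ordered_prod_lprod: "ordered_prod n s \<zeta> = lprod (map (\<lambda>i. \<zeta> (s i)) [0..<n])"
  by (simp add: ordered_prod_def lprod_def)




lemma map_upd_perm:
  assumes s: "s permutes {0..<n}" and i: "i < n"
  shows "map (\<lambda>j. (\<zeta>(s i := X)) (s j)) [0..<n] = (map (\<lambda>j. \<zeta> (s j)) [0..<n])[i := X]"
proof (rule nth_equalityI)
  fix j assume "j < length (map (\<lambda>j. (\<zeta>(s i := X)) (s j)) [0..<n])"
  then have j: "j < n" by simp
  have "s j = s i \<longleftrightarrow> j = i"
    using permutes_inj_on[OF s, of "{0..<n}"] i j by (auto dest: inj_onD)
  then show "map (\<lambda>j. (\<zeta>(s i := X)) (s j)) [0..<n] ! j = (map (\<lambda>j. \<zeta> (s j)) [0..<n])[i := X] ! j"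
    using i j by (auto simp: nth_list_update)
qed simp

lemma lprod_upd: "i < length xs \<Longrightarrow> lprod (xs[i := X]) = lprod (take i xs) ** X ** lprod (drop (Suc i) xs)"
  by (simp add: upd_conv_take_nth_drop lprod_append matrix_mul_assoc)

definition Lp :: "(nat \<Rightarrow> nat) \<Rightarrow> (nat \<Rightarrow> 'a::semiring_1^'d^'d) \<Rightarrow> nat \<Rightarrow> 'a^'d^'d" where
  "Lp s \<zeta> i = lprod (map (\<lambda>j. \<zeta> (s j)) [0..<i])"
definition Rp :: "nat \<Rightarrow> (nat \<Rightarrow> nat) \<Rightarrow> (nat \<Rightarrow> 'a::semiring_1^'d^'d) \<Rightarrow> nat \<Rightarrow> 'a^'d^'d" where
  "Rp n s \<zeta> i = lprod (map (\<lambda>j. \<zeta> (s j)) [Suc i..<n])"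

lemma op_upd:
  assumes s: "s permutes {0..<n}" and i: "i < n"
  shows "ordered_prod n s (\<zeta>(s i := X)) = Lp s \<zeta> i ** X ** Rp n s \<zeta> i"
proof -
  have "ordered_prod n s (\<zeta>(s i := X)) = lprod ((map (\<lambda>j. \<zeta> (s j)) [0..<n])[i := X])"
    unfolding ordered_prod_lprod using map_upd_perm[OF s i] by metis
  also have "\<dots> = Lp s \<zeta> i ** X ** Rp n s \<zeta> i"
    using i by (simp add: lprod_upd Lp_def Rp_def take_map drop_map)
  finally show ?thesis .
qed

lemma op_at:
  assumes s: "s permutes {0..<n}" and i: "i < n"
  shows "ordered_prod n s \<zeta> = Lp s \<zeta> i ** \<zeta> (s i) ** Rp n s \<zeta> i"
  using op_upd[OF s i, of \<zeta> "\<zeta> (s i)"] by simp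

lemma perm_inv_facts:
  assumes s: "s permutes {0..<(n::nat)}" and k: "k < n"
  shows "s (inv s k) = k" "inv s k < n"
proof -
  show "s (inv s k) = k" using permutes_inverses(1)[OF s] .
  have "inv s k \<in> {0..<n} \<longleftrightarrow> k \<in> {0..<n}" by (rule permutes_in_image[OF permutes_inv[OF s]])
  then show "inv s k < n" using k by auto
qed

lemma f_slot:
  assumes k: "k < n"
  shows "mlpoly_eval n c (\<zeta>(k := X)) =
    (\<Sum>s\<in>{s. s permutes {0..<n}}. msc (c s) (Lp s \<zeta> (inv s k) ** X ** Rp n s \<zeta> (inv s k)))"
  unfolding mlpoly_eval_def
proof (rule sum.cong[OF refl])
  fix s assume "s \<in> {s. s permutes {0..<n}}"
  then have s: "s permutes {0..<n}" by simp
  have "ordered_prod n s (\<zeta>(k := X)) = ordered_prod n s (\<zeta>(s (inv s k) := X))"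
    using perm_inv_facts[OF s k] by simp
  also have "\<dots> = Lp s \<zeta> (inv s k) ** X ** Rp n s \<zeta> (inv s k)"
    by (rule op_upd[OF s perm_inv_facts(2)[OF s k]])
  finally show "mat (c s) ** ordered_prod n s (\<zeta>(k := X)) = msc (c s) (Lp s \<zeta> (inv s k) ** X ** Rp n s \<zeta> (inv s k))"
    by (simp add: mat_mm_l)
qed

lemma f_slot_add:
  assumes "k < n"
  shows "mlpoly_eval n c (\<zeta>(k := X + Y)) = mlpoly_eval n c (\<zeta>(k := X)) + mlpoly_eval n c (\<zeta>(k := Y))"
  unfolding f_slot[OF assms] by (simp add: matrix_add_ldistrib mm_add_r msc_add sum.distrib)

lemma f_slot_msc:
  assumes "k < n"
  shows "mlpoly_eval n c (\<zeta>(k := msc a X)) = msc a (mlpoly_eval n c (\<zeta>(k := X)))"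
  unfolding f_slot[OF assms] by (simp add: mm_smul_l mm_smul_r msc_msc msc_sum mult.commute)

lemma f_slot_sum:
  assumes "k < n"
  shows "mlpoly_eval n c (\<zeta>(k := sum g S)) = (\<Sum>x\<in>S. mlpoly_eval n c (\<zeta>(k := g x)))"
  unfolding f_slot[OF assms] by (simp add: mm_sum_l mm_sum_r msc_sum sum.swap[where A = S])

lemma lprod_deriv:
  "(\<Sum>i<length xs. lprod (take i xs) ** (A ** xs!i - xs!i ** A) ** lprod (drop (Suc i) xs))
     = A ** lprod xs - lprod xs ** (A::'a::field^'d^'d)"
proof (induction xs)
  case Nil
  then show ?case by simp
next
  case (Cons x xs)
  have "(\<Sum>i<length (x # xs). lprod (take i (x # xs)) ** (A ** (x # xs)!i - (x # xs)!i ** A) ** lprod (drop (Suc i) (x # xs)))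
     = (A ** x - x ** A) ** lprod xs +
       (\<Sum>i<length xs. x ** (lprod (take i xs) ** (A ** xs!i - xs!i ** A) ** lprod (drop (Suc i) xs)))"
    by (simp add: sum.lessThan_Suc_shift matrix_mul_assoc del: sum.lessThan_Suc)
  also have "\<dots> = (A ** x - x ** A) ** lprod xs + x ** (A ** lprod xs - lprod xs ** A)"
    by (simp add: mm_sum_r[symmetric] Cons.IH)
  also have "\<dots> = A ** lprod (x # xs) - lprod (x # xs) ** A"
    by (simp add: mm_diff_l mm_diff_r matrix_mul_assoc)
  finally show ?case .
qed

lemma op_deriv:
  assumes s: "s permutes {0..<n}"
  shows "(\<Sum>k<n. ordered_prod n s (\<zeta>(k := A ** \<zeta> k - \<zeta> k ** A)))
     = A ** ordered_prod n s \<zeta> - ordered_prod n s \<zeta> ** (A::'a::field^'d^'d)"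
proof -
  let ?xs = "map (\<lambda>j. \<zeta> (s j)) [0..<n]"
  have bij: "bij_betw s {..<n} {..<n}"
    using permutes_imp_bij[OF s] by (simp add: atLeast0LessThan)
  have "(\<Sum>k<n. ordered_prod n s (\<zeta>(k := A ** \<zeta> k - \<zeta> k ** A)))
      = (\<Sum>i<n. ordered_prod n s (\<zeta>(s i := A ** \<zeta> (s i) - \<zeta> (s i) ** A)))"
    using sum.reindex_bij_betw[OF bij, of "\<lambda>k. ordered_prod n s (\<zeta>(k := A ** \<zeta> k - \<zeta> k ** A))"] by simp
  also have "\<dots> = (\<Sum>i<length ?xs. lprod (take i ?xs) ** (A ** ?xs!i - ?xs!i ** A) ** lprod (drop (Suc i) ?xs))"
    by (rule sum.cong) (auto simp: op_upd[OF s] Lp_def Rp_def take_map drop_map)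
  also have "\<dots> = A ** ordered_prod n s \<zeta> - ordered_prod n s \<zeta> ** A"
    using lprod_deriv[of ?xs A] by (simp add: ordered_prod_lprod)
  finally show ?thesis .
qed

lemma f_deriv:
  "(\<Sum>k<n. mlpoly_eval n c (\<zeta>(k := A ** \<zeta> k - \<zeta> k ** A)))
     = A ** mlpoly_eval n c \<zeta> - mlpoly_eval n c \<zeta> ** (A::'a::field^'d^'d)"
proof -
  have "(\<Sum>k<n. mlpoly_eval n c (\<zeta>(k := A ** \<zeta> k - \<zeta> k ** A)))
     = (\<Sum>s\<in>{s. s permutes {0..<n}}. msc (c s) (\<Sum>k<n. ordered_prod n s (\<zeta>(k := A ** \<zeta> k - \<zeta> k ** A))))"
    unfolding mlpoly_eval_def by (simp add: mat_mm_l msc_sum sum.swap[where A = "{..<n}"])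
  also have "\<dots> = (\<Sum>s\<in>{s. s permutes {0..<n}}. msc (c s) (A ** ordered_prod n s \<zeta> - ordered_prod n s \<zeta> ** A))"
    by (rule sum.cong) (auto simp: op_deriv)
  also have "\<dots> = A ** mlpoly_eval n c \<zeta> - mlpoly_eval n c \<zeta> ** A"
    unfolding mlpoly_eval_def
    by (simp add: mat_mm_l msc_diff mm_sum_r mm_sum_l mm_smul_l mm_smul_r sum_subtractf)
  finally show ?thesis .
qed

lemma lprod_conj:
  assumes "Pv ** P = mat 1" "P ** Pv = mat 1"
  shows "lprod (map (\<lambda>X. P ** X ** Pv) xs) = P ** lprod xs ** (Pv::'a::field^'d^'d)"
proof (induction xs)
  case Nil
  then show ?case using assms by simp
next
  case (Cons x xs)
  have "P ** x ** Pv ** (P ** lprod xs ** Pv) = P ** x ** (Pv ** P) ** lprod xs ** Pv"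
    by (simp add: matrix_mul_assoc)
  then show ?case using Cons assms by (simp add: matrix_mul_assoc)
qed

lemma f_conj:
  assumes "Pv ** P = mat 1" "P ** Pv = mat 1"
  shows "mlpoly_eval n c (\<lambda>k. P ** \<zeta> k ** Pv) = P ** mlpoly_eval n c \<zeta> ** (Pv::'a::field^'d^'d)"
proof -
  have "ordered_prod n s (\<lambda>k. P ** \<zeta> k ** Pv) = P ** ordered_prod n s \<zeta> ** Pv" for s
    using lprod_conj[OF assms, of "map (\<lambda>i. \<zeta> (s i)) [0..<n]"]
    by (simp add: ordered_prod_lprod o_def)
  then show ?thesis
    unfolding mlpoly_eval_def
    by (simp add: mat_mm_l mm_sum_r mm_sum_l mm_smul_l mm_smul_r)
qed




definition Qf :: "'a::field^'d^'d \<Rightarrow> 'a^'d^'d \<Rightarrow> 'a^'d^'d \<Rightarrow> 'a^'d^'d \<Rightarrow> 'a^'d^'d \<Rightarrow> 'a^'d^'d \<Rightarrow> 'a^'d^'d \<Rightarrow> 'a^'d^'d" where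
  "Qf a1 a2 a3 a4 a5 a6 F = a1 ** F ** F + a2 ** F ** a3 ** F + F ** a5 ** F ** a6 + F ** a4 ** F
          - a5 ** F ** F ** a6"

definition Bf :: "'a::field^'d^'d \<Rightarrow> 'a^'d^'d \<Rightarrow> 'a^'d^'d \<Rightarrow> 'a^'d^'d \<Rightarrow> 'a^'d^'d \<Rightarrow> 'a^'d^'d \<Rightarrow> 'a^'d^'d \<Rightarrow> 'a^'d^'d \<Rightarrow> 'a^'d^'d" where
  "Bf a1 a2 a3 a4 a5 a6 F G = a1 ** F ** G + a1 ** G ** F + a2 ** F ** a3 ** G + a2 ** G ** a3 ** F
     + F ** a5 ** G ** a6 + G ** a5 ** F ** a6 + F ** a4 ** G + G ** a4 ** F
     - a5 ** F ** G ** a6 - a5 ** G ** F ** a6"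

lemma Q_add: "Qf a1 a2 a3 a4 a5 a6 (F + G) = Qf a1 a2 a3 a4 a5 a6 F + Qf a1 a2 a3 a4 a5 a6 G + Bf a1 a2 a3 a4 a5 a6 F G"
  unfolding Qf_def Bf_def by (simp add: matrix_add_ldistrib mm_add_r algebra_simps)

lemma B_add2: "Bf a1 a2 a3 a4 a5 a6 F (G + H) = Bf a1 a2 a3 a4 a5 a6 F G + Bf a1 a2 a3 a4 a5 a6 F H"
  unfolding Bf_def by (simp add: matrix_add_ldistrib mm_add_r algebra_simps)

lemma B_zero2: "Bf a1 a2 a3 a4 a5 a6 F 0 = 0"
  unfolding Bf_def by simp

lemma B_sum2: "Bf a1 a2 a3 a4 a5 a6 F (sum g S) = (\<Sum>x\<in>S. Bf a1 a2 a3 a4 a5 a6 F (g x))"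
  by (induction S rule: infinite_finite_induct) (auto simp: B_zero2 B_add2)

lemma Q_msc: "Qf a1 a2 a3 a4 a5 a6 (msc k F) = msc (k * k) (Qf a1 a2 a3 a4 a5 a6 F)"
  unfolding Qf_def by (simp add: mm_smul_l mm_smul_r msc_msc msc_add msc_diff)

lemma B_msc: "Bf a1 a2 a3 a4 a5 a6 (msc k F) (msc k G) = msc (k * k) (Bf a1 a2 a3 a4 a5 a6 F G)"
  unfolding Bf_def by (simp add: mm_smul_l mm_smul_r msc_msc msc_add msc_diff mult.commute)

definition good where
  "good a1 a2 a3 a4 a5 a6 N \<longleftrightarrow> Qf a1 a2 a3 a4 a5 a6 N = 0 \<and> (\<forall>A. Bf a1 a2 a3 a4 a5 a6 N (A ** N - N ** A) = 0)"

lemma msc_eq0: "msc k (A::'a::field^'n^'m) = 0 \<Longrightarrow> k \<noteq> 0 \<Longrightarrow> A = 0"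
  by (simp add: vec_eq_iff)

lemma good_scale:
  assumes "good a1 a2 a3 a4 a5 a6 (msc k N)" "k \<noteq> 0"
  shows "good a1 a2 a3 a4 a5 a6 N"
proof -
  have "msc k (A ** N) - msc k N ** A = msc k (A ** N - N ** A)" for A
    by (simp add: msc_diff mm_smul_l)
  then have "Bf a1 a2 a3 a4 a5 a6 (msc k N) (msc k (A ** N - N ** A)) = 0" for A
    using assms(1) unfolding good_def by (metis mm_smul_r)
  then have "msc (k * k) (Bf a1 a2 a3 a4 a5 a6 N (A ** N - N ** A)) = 0" for A
    by (simp add: B_msc)
  then have "Bf a1 a2 a3 a4 a5 a6 N (A ** N - N ** A) = 0" for A
    using assms(2) by (meson msc_eq0 mult_eq_0_iff)
  moreover have "Qf a1 a2 a3 a4 a5 a6 N = 0"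
    using assms unfolding good_def by (metis Q_msc msc_eq0 mult_eq_0_iff)
  ultimately show ?thesis unfolding good_def by blast
qed

lemma good_eval:
  assumes ident: "\<forall>\<zeta> :: nat \<Rightarrow> 'a::field^'d^'d.
      (let F = mlpoly_eval n c \<zeta> in
        a1 ** F ** F + a2 ** F ** a3 ** F + F ** a5 ** F ** a6 + F ** a4 ** F
          - a5 ** F ** F ** a6 = 0)"
  shows "good a1 a2 a3 a4 a5 a6 (mlpoly_eval n c \<zeta>)"
proof -
  have Q0: "Qf a1 a2 a3 a4 a5 a6 (mlpoly_eval n c \<xi>) = 0" for \<xi>
    using ident[rule_format, of \<xi>] by (simp add: Qf_def Let_def)
  let ?F = "mlpoly_eval n c \<zeta>"
  have "Bf a1 a2 a3 a4 a5 a6 ?F (A ** ?F - ?F ** A) = 0" for A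
  proof -
    have "Bf a1 a2 a3 a4 a5 a6 ?F (mlpoly_eval n c (\<zeta>(k := A ** \<zeta> k - \<zeta> k ** A))) = 0" if k: "k < n" for k
    proof -
      let ?G = "mlpoly_eval n c (\<zeta>(k := A ** \<zeta> k - \<zeta> k ** A))"
      have "mlpoly_eval n c (\<zeta>(k := \<zeta> k + (A ** \<zeta> k - \<zeta> k ** A))) = ?F + ?G"
        using f_slot_add[OF k, of c \<zeta> "\<zeta> k"] by simp
      then have "Qf a1 a2 a3 a4 a5 a6 (?F + ?G) = 0" by (metis Q0)
      then show ?thesis using Q0 by (simp add: Q_add)
    qed
    then have "(\<Sum>k<n. Bf a1 a2 a3 a4 a5 a6 ?F (mlpoly_eval n c (\<zeta>(k := A ** \<zeta> k - \<zeta> k ** A)))) = 0"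
      by simp
    then show ?thesis by (simp add: B_sum2[symmetric] f_deriv)
  qed
  then show ?thesis using Q0 unfolding good_def by blast
qed




definition em :: "'d \<Rightarrow> 'd \<Rightarrow> 'a::field^'d^'d" where
  "em a b = (\<chi> r t. if r = a \<and> t = b then 1 else 0)"

lemma em_nth[simp]: "em a b $ r $ t = (if r = a \<and> t = b then 1 else 0)"
  by (simp add: em_def)

lemma em_mm_l: "em a b ** (M::'a::field^'d^'d) = (\<chi> r t. if r = a then M$b$t else 0)"
  by (simp add: vec_eq_iff matrix_matrix_mult_def if_distrib if_distribR sum.delta cong: if_cong)

lemma em_mm_r: "(M::'a::field^'d^'d) ** em a b = (\<chi> r t. if t = b then M$r$a else 0)"
  by (simp add: vec_eq_iff matrix_matrix_mult_def if_distrib if_distribR sum.delta' cong: if_cong)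

lemma mat_decomp: "(X::'a::field^'d^'d) = (\<Sum>p\<in>UNIV. msc (X $ fst p $ snd p) (em (fst p) (snd p)))"
  unfolding vec_eq_iff
proof (intro allI)
  fix r t
  have "(\<Sum>p\<in>UNIV. msc (X $ fst p $ snd p) (em (fst p) (snd p))) $ r $ t
      = (\<Sum>p\<in>UNIV. if p = (r, t) then X $ r $ t else 0)"
    unfolding sum_component msc_nth em_nth by (rule sum.cong) auto
  also have "\<dots> = X $ r $ t" by simp
  finally show "X $ r $ t = (\<Sum>p\<in>UNIV. msc (X $ fst p $ snd p) (em (fst p) (snd p))) $ r $ t" by simp
qed

definition flw :: "(nat \<Rightarrow> 'd) \<Rightarrow> (nat \<Rightarrow> 'd) \<Rightarrow> nat \<Rightarrow> 'd \<Rightarrow> int" where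
  "flw Aa Bb n v = (\<Sum>k<n. of_bool (Aa k = v) - of_bool (Bb k = v))"

lemma lprod_units:
  "(lprod (map (\<lambda>p. em (fst p) (snd p)) ps) :: 'a::field^'d^'d) $ r $ t \<noteq> 0 \<Longrightarrow>
    (\<Sum>p\<leftarrow>ps. (of_bool (fst p = v) - of_bool (snd p = v) :: int)) = of_bool (r = v) - of_bool (t = v)"
proof (induction ps arbitrary: r)
  case Nil
  then show ?case by (auto simp: mat_def split: if_splits)
next
  case (Cons p ps)
  from Cons.prems have r: "r = fst p" and nz: "(lprod (map (\<lambda>p. em (fst p) (snd p)) ps) :: 'a::field^'d^'d) $ snd p $ t \<noteq> 0"
    by (auto simp: em_mm_l split: if_splits)
  show ?case using Cons.IH[OF nz] r by simp
qed

lemma op_units: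
  assumes s: "s permutes {0..<n}" and units: "\<forall>k<n. \<zeta> k = em (Aa k) (Bb k)"
    and nz: "(ordered_prod n s \<zeta> :: 'a::field^'d^'d) $ r $ t \<noteq> 0"
  shows "flw Aa Bb n v = of_bool (r = v) - of_bool (t = v)"
proof -
  let ?ps = "map (\<lambda>i. (Aa (s i), Bb (s i))) [0..<n]"
  have meq: "map (\<lambda>i. \<zeta> (s i)) [0..<n] = map (\<lambda>p. em (fst p) (snd p)) ?ps"
  proof -
    have "\<zeta> (s i) = em (Aa (s i)) (Bb (s i))" if "i < n" for i
    proof -
      have "s i \<in> {0..<n}" using permutes_in_image[OF s] that by simp
      then show ?thesis using units by simp
    qed
    then show ?thesis by (auto intro!: map_cong)
  qed
  have "ordered_prod n s \<zeta> = lprod (map (\<lambda>p. em (fst p) (snd p)) ?ps)"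
    unfolding ordered_prod_lprod meq ..
  with nz have "(lprod (map (\<lambda>p. em (fst p) (snd p)) ?ps) :: 'a::field^'d^'d) $ r $ t \<noteq> 0"
    by simp
  from lprod_units[OF this] have "(\<Sum>p\<leftarrow>?ps. (of_bool (fst p = v) - of_bool (snd p = v) :: int)) = of_bool (r = v) - of_bool (t = v)" .
  moreover have "(\<Sum>p\<leftarrow>?ps. (of_bool (fst p = v) - of_bool (snd p = v) :: int))
      = (\<Sum>i\<in>{0..<n}. of_bool (Aa (s i) = v) - of_bool (Bb (s i) = v))"
    by (simp add: sum_set_upt_conv_sum_list_nat[symmetric] o_def)
  moreover have "\<dots> = flw Aa Bb n v"
    unfolding flw_def
    using sum.reindex_bij_betw[OF permutes_imp_bij[OF s], of "\<lambda>k. of_bool (Aa k = v) - of_bool (Bb k = v)"]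
    by (simp add: atLeast0LessThan)
  ultimately show ?thesis by simp
qed

lemma sum_nz_ex: "sum g S \<noteq> 0 \<Longrightarrow> \<exists>x\<in>S. g x \<noteq> 0"
  by (meson sum.neutral)

lemma f_entry: "mlpoly_eval n c \<zeta> $ r $ t = (\<Sum>s\<in>{s. s permutes {0..<n}}. c s * ordered_prod n s \<zeta> $ r $ t)"
  unfolding mlpoly_eval_def by (simp add: mat_mm_l)

lemma f_units:
  assumes units: "\<forall>k<n. \<zeta> k = em (Aa k) (Bb k)" and ij: "i \<noteq> j"
    and nz: "(mlpoly_eval n c \<zeta> :: 'a::field^'d^'d) $ i $ j \<noteq> 0"
  shows "mlpoly_eval n c \<zeta> = msc (mlpoly_eval n c \<zeta> $ i $ j) (em i j)"
proof -
  obtain s0 where s0: "s0 permutes {0..<n}" "(ordered_prod n s0 \<zeta> :: 'a::field^'d^'d) $ i $ j \<noteq> 0"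
    using sum_nz_ex[OF nz[unfolded f_entry]] by auto
  have fl: "flw Aa Bb n v = of_bool (i = v) - of_bool (j = v)" for v
    using op_units[OF s0(1) units s0(2)] .
  have zero: "(mlpoly_eval n c \<zeta> :: 'a::field^'d^'d) $ r $ t = 0" if rt: "\<not> (r = i \<and> t = j)" for r t
  proof -
    have "(ordered_prod n s \<zeta> :: 'a::field^'d^'d) $ r $ t = 0" if s: "s permutes {0..<n}" for s
    proof (rule ccontr)
      assume "(ordered_prod n s \<zeta> :: 'a::field^'d^'d) $ r $ t \<noteq> 0"
      then have fl2: "flw Aa Bb n v = of_bool (r = v) - of_bool (t = v)" for v
        using op_units[OF s units] by blast
      have "(of_bool (r = i) - of_bool (t = i) :: int) = 1" using fl[of i] fl2[of i] ij by simp
      then have "r = i" by (cases "r = i"; cases "t = i") auto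
      have "(of_bool (r = j) - of_bool (t = j) :: int) = -1" using fl[of j] fl2[of j] ij by simp
      then have "t = j" by (cases "r = j"; cases "t = j") auto
      with \<open>r = i\<close> rt show False by simp
    qed
    then show ?thesis unfolding f_entry by simp
  qed
  show ?thesis
    unfolding vec_eq_iff
  proof (intro allI)
    fix r t
    show "mlpoly_eval n c \<zeta> $ r $ t = msc (mlpoly_eval n c \<zeta> $ i $ j) (em i j) $ r $ t"
      using zero[of r t] by (cases "r = i \<and> t = j") auto
  qed
qed




lemma unit_reduce_aux:
  "m \<le> n \<Longrightarrow> (mlpoly_eval n c \<zeta> :: 'a::field^'d^'d) $ i $ j \<noteq> 0 \<Longrightarrow>
     \<exists>\<zeta>'. (\<forall>k<m. \<exists>a b. \<zeta>' k = em a b) \<and> (mlpoly_eval n c \<zeta>' :: 'a::field^'d^'d) $ i $ j \<noteq> 0"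
proof (induction m)
  case 0
  then show ?case by blast
next
  case (Suc m)
  then obtain \<zeta>' where u: "\<forall>k<m. \<exists>a b. \<zeta>' k = em a b" and nz: "(mlpoly_eval n c \<zeta>' :: 'a::field^'d^'d) $ i $ j \<noteq> 0"
    by auto
  have m: "m < n" using Suc.prems by simp
  have "mlpoly_eval n c \<zeta>' = mlpoly_eval n c (\<zeta>'(m := \<zeta>' m))" by simp
  also have "\<dots> = mlpoly_eval n c (\<zeta>'(m := (\<Sum>p\<in>UNIV. msc (\<zeta>' m $ fst p $ snd p) (em (fst p) (snd p)))))"
    by (subst mat_decomp[of "\<zeta>' m"]) (rule refl)
  also have "\<dots> = (\<Sum>p\<in>UNIV. msc (\<zeta>' m $ fst p $ snd p) (mlpoly_eval n c (\<zeta>'(m := em (fst p) (snd p)))))"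
    by (simp add: f_slot_sum[OF m] f_slot_msc[OF m])
  finally have "(\<Sum>p\<in>UNIV. msc (\<zeta>' m $ fst p $ snd p) (mlpoly_eval n c (\<zeta>'(m := em (fst p) (snd p))))) $ i $ j \<noteq> 0"
    using nz by simp
  then obtain p where p: "(mlpoly_eval n c (\<zeta>'(m := em (fst p) (snd p))) :: 'a::field^'d^'d) $ i $ j \<noteq> 0"
    unfolding sum_component msc_nth by (metis (no_types, lifting) mult_zero_right sum.neutral)
  show ?case
  proof (intro exI conjI)
    show "\<forall>k<Suc m. \<exists>a b. (\<zeta>'(m := em (fst p) (snd p))) k = em a b"
      using u by (auto simp: less_Suc_eq)
  qed (rule p)
qed

lemma offdiag_to_em:
  assumes ij: "i \<noteq> j" and nz: "(mlpoly_eval n c \<zeta> :: 'a::field^'d^'d) $ i $ j \<noteq> 0"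
  shows "\<exists>\<zeta>' k. k \<noteq> 0 \<and> (mlpoly_eval n c \<zeta>' :: 'a::field^'d^'d) = msc k (em i j)"
proof -
  obtain \<zeta>' where u: "\<forall>k<n. \<exists>a b. \<zeta>' k = em a b" and nz': "(mlpoly_eval n c \<zeta>' :: 'a::field^'d^'d) $ i $ j \<noteq> 0"
    using unit_reduce_aux[OF order_refl nz] by blast
  from u have "\<forall>k. \<exists>ab. k < n \<longrightarrow> \<zeta>' k = em (fst ab) (snd ab)" by auto
  then obtain g where g: "\<forall>k. k < n \<longrightarrow> \<zeta>' k = em (fst (g k)) (snd (g k))" by metis
  have "\<forall>k<n. \<zeta>' k = em ((fst \<circ> g) k) ((snd \<circ> g) k)" using g by simp
  from f_units[OF this ij nz'] nz' show ?thesis by blast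
qed

lemma em_sq: "u \<noteq> w \<Longrightarrow> em u w ** (em u w :: 'a::field^'d^'d) = 0"
  by (simp add: em_mm_l vec_eq_iff)

lemma nonscalar_cases:
  assumes "\<not> scalar_matrix (F::'a::field^'d^'d)"
  shows "(\<exists>i j. i \<noteq> j \<and> F$i$j \<noteq> 0) \<or> (\<exists>u w. F$u$u \<noteq> F$w$w)"
proof (rule ccontr)
  assume "\<not> ?thesis"
  then have off: "\<And>i j. i \<noteq> j \<Longrightarrow> F$i$j = 0" and diag: "\<And>u w. F$u$u = F$w$w" by auto
  have "F = mat (F $ undefined $ undefined)"
    unfolding vec_eq_iff mat_def using off diag by auto
  then show False using assms unfolding scalar_matrix_def by blast
qed

lemma exists_em:
  assumes "\<not> central_valued n c TYPE('d)"
  shows "\<exists>\<zeta> x y k. x \<noteq> y \<and> k \<noteq> 0 \<and> (mlpoly_eval n c \<zeta> :: 'a::field^'d::finite^'d) = msc k (em x y)"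
proof -
  obtain \<zeta> where ns: "\<not> scalar_matrix (mlpoly_eval n c \<zeta> :: 'a::field^'d^'d)"
    using assms unfolding central_valued_def by blast
  let ?F = "mlpoly_eval n c \<zeta> :: 'a::field^'d^'d"
  show ?thesis
  proof (cases "\<exists>i j. i \<noteq> j \<and> ?F$i$j \<noteq> 0")
    case True
    then obtain i j where "i \<noteq> j" "?F$i$j \<noteq> 0" by blast
    then show ?thesis using offdiag_to_em by blast
  next
    case False
    then have off: "\<And>i j. i \<noteq> j \<Longrightarrow> ?F$i$j = 0" by blast
    from nonscalar_cases[OF ns] False obtain u w where uw: "?F$u$u \<noteq> ?F$w$w" by blast
    then have "u \<noteq> w" by blast
    define E where "E = (em u w :: 'a::field^'d^'d)"
    define P where "P = mat 1 + E"
    define Pv where "Pv = mat 1 - E"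
    have EE: "E ** E = 0" unfolding E_def using em_sq[OF \<open>u \<noteq> w\<close>] .
    have inv1: "P ** Pv = mat 1" unfolding P_def Pv_def
      by (simp add: matrix_add_ldistrib mm_add_r mm_diff_l mm_diff_r EE)
    have inv2: "Pv ** P = mat 1" unfolding P_def Pv_def
      by (simp add: matrix_add_ldistrib mm_add_r mm_diff_l mm_diff_r EE)
    have "P ** ?F ** Pv = ?F + E ** ?F - ?F ** E - E ** ?F ** E"
      unfolding P_def Pv_def by (simp add: matrix_add_ldistrib mm_add_r mm_diff_l mm_diff_r)
    then have "(P ** ?F ** Pv) $ u $ w = ?F $ u $ w + ?F $ w $ w - ?F $ u $ u - ?F $ w $ u"
      unfolding E_def using \<open>u \<noteq> w\<close> by (simp add: em_mm_l em_mm_r)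
    also have "\<dots> = ?F $ w $ w - ?F $ u $ u" using off \<open>u \<noteq> w\<close> by simp
    finally have "(mlpoly_eval n c (\<lambda>k. P ** \<zeta> k ** Pv) :: 'a::field^'d^'d) $ u $ w \<noteq> 0"
      using uw f_conj[OF inv2 inv1] by simp
    then show ?thesis using offdiag_to_em \<open>u \<noteq> w\<close> by blast
  qed
qed




definition dt :: "'a::field^'d \<Rightarrow> 'a^'d \<Rightarrow> 'a" where
  "dt v u = (\<Sum>i\<in>UNIV. v$i * u$i)"
definition outer :: "'a::field^'d \<Rightarrow> 'a^'d \<Rightarrow> 'a^'d^'d" where
  "outer u v = (\<chi> i j. u$i * v$j)"
abbreviation ax :: "'d \<Rightarrow> 'a::field^'d" where "ax i \<equiv> axis i 1"

lemma outer_nth[simp]: "outer u v $ i $ j = u$i * v$j" by (simp add: outer_def)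

lemma dt_comm: "dt v u = dt u v" by (simp add: dt_def mult.commute)
lemma dt_add1: "dt (a + b) c = dt a c + dt b c" by (simp add: dt_def algebra_simps sum.distrib)
lemma dt_add2: "dt c (a + b) = dt c a + dt c b" by (simp add: dt_def algebra_simps sum.distrib)
lemma dt_diff1: "dt (a - b) c = dt a c - dt b c" by (simp add: dt_def algebra_simps sum_subtractf)
lemma dt_diff2: "dt c (a - b) = dt c a - dt c b" by (simp add: dt_def algebra_simps sum_subtractf)
lemma dt_smul1: "dt (k *s a) c = k * dt a c" by (simp add: dt_def sum_distrib_left mult.assoc)
lemma dt_smul2: "dt c (k *s a) = k * dt c a" by (simp add: dt_def sum_distrib_left mult_ac)
lemma dt_neg1: "dt (- a) c = - dt a c" by (simp add: dt_def sum_negf)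
lemma dt_neg2: "dt c (- a) = - dt c a" by (simp add: dt_def sum_negf)
lemma dt_zero[simp]: "dt 0 c = 0" "dt c 0 = 0" by (simp_all add: dt_def)
lemma dt_ax1[simp]: "dt (ax i) c = c$i"
proof -
  have "dt (ax i) c = (\<Sum>j\<in>UNIV. if j = i then c$j else 0)"
    unfolding dt_def by (rule sum.cong) (auto simp: axis_def)
  then show ?thesis by simp
qed
lemma dt_ax2[simp]: "dt c (ax i) = c$i"
  using dt_ax1 dt_comm by metis
lemma dt_mv: "dt a (M *v b) = dt (a v* M) b"
proof -
  have "dt a (M *v b) = (\<Sum>i\<in>UNIV. \<Sum>j\<in>UNIV. a$i * M$i$j * b$j)"
    by (simp add: dt_def matrix_vector_mult_def sum_distrib_left mult.assoc)
  also have "\<dots> = (\<Sum>j\<in>UNIV. \<Sum>i\<in>UNIV. a$i * M$i$j * b$j)"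
    by (rule sum.swap)
  also have "\<dots> = dt (a v* M) b"
    by (simp add: dt_def vector_matrix_mult_def sum_distrib_right)
  finally show ?thesis .
qed

lemmas dt_simps = dt_add1 dt_add2 dt_diff1 dt_diff2 dt_smul1 dt_smul2 dt_neg1 dt_neg2

lemma em_outer: "em i j = outer (ax i) (ax j)"
  by (simp add: vec_eq_iff axis_def)

lemma mm_outer: "(M::'a::field^'d^'d) ** outer a b = outer (M *v a) b"
  by (simp add: vec_eq_iff matrix_matrix_mult_def matrix_vector_mult_def sum_distrib_right mult.assoc)
lemma outer_mm: "outer a b ** (M::'a::field^'d^'d) = outer a (b v* M)"
  by (simp add: vec_eq_iff matrix_matrix_mult_def vector_matrix_mult_def sum_distrib_left mult.assoc)
lemma outer_outer: "outer a b ** outer c d = msc (dt b c) (outer a (d::'a::field^'d))"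
  by (simp add: outer_mm vec_eq_iff vector_matrix_mult_def dt_def sum_distrib_right sum_distrib_left mult_ac)
lemma outer_mv: "outer a b *v c = dt b c *s a"
  by (simp add: vec_eq_iff matrix_vector_mult_def dt_def sum_distrib_left mult_ac)
lemma vm_outer: "c v* outer a b = dt c a *s b"
  by (simp add: vec_eq_iff vector_matrix_mult_def dt_def sum_distrib_right sum_distrib_left mult_ac)
lemma msc_mv: "msc k A *v c = k *s (A *v (c::'a::field^'d))"
  by (simp add: vec_eq_iff matrix_vector_mult_def sum_distrib_left mult_ac)
lemma vm_msc: "c v* msc k A = k *s (c v* (A::'a::field^'d^'d))"
  by (simp add: vec_eq_iff vector_matrix_mult_def sum_distrib_left mult_ac)
lemma outer_add1: "outer (a + b) c = outer a c + outer b c" by (simp add: vec_eq_iff algebra_simps)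
lemma outer_add2: "outer c (a + b) = outer c a + outer c b" by (simp add: vec_eq_iff algebra_simps)
lemma outer_diff1: "outer (a - b) c = outer a c - outer b c" by (simp add: vec_eq_iff algebra_simps)
lemma outer_diff2: "outer c (a - b) = outer c a - outer c b" by (simp add: vec_eq_iff algebra_simps)
lemma outer_smul1: "outer (k *s a) c = msc k (outer a c)" by (simp add: vec_eq_iff algebra_simps)
lemma outer_smul2: "outer c (k *s a) = msc k (outer c a)" by (simp add: vec_eq_iff algebra_simps)
lemma outer_zero[simp]: "outer 0 c = 0" "outer c 0 = 0" by (simp_all add: vec_eq_iff)

lemma sm_inverse:
  assumes "t * (1 + dt b a) = 1"
  shows "(mat 1 + outer a b) ** (mat 1 - msc t (outer a b)) = (mat 1 :: 'a::field^'d^'d)"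
    "(mat 1 - msc t (outer a b)) ** (mat 1 + outer a b) = (mat 1 :: 'a::field^'d^'d)"
proof -
  have e: "outer a b - msc t (outer a b) - msc t (msc (dt b a) (outer a b)) = (0::'a^'d^'d)"
    unfolding vec_eq_iff
  proof (intro allI)
    fix i j
    have "a$i*b$j - t*(a$i*b$j) - t*(dt b a*(a$i*b$j)) = a$i*b$j*(1 - t*(1 + dt b a))"
      by (simp add: algebra_simps msc_add msc_diff)
    then show "(outer a b - msc t (outer a b) - msc t (msc (dt b a) (outer a b))) $ i $ j = (0::'a^'d^'d) $ i $ j"
      using assms by simp
  qed
  have "(mat 1 + outer a b) ** (mat 1 - msc t (outer a b)) =
     mat 1 - msc t (outer a b) + (outer a b - msc t (msc (dt b a) (outer a b)))"
    by (simp add: matrix_add_ldistrib mm_add_r mm_diff_l mm_diff_r mm_smul_l mm_smul_r outer_outer msc_add msc_diff algebra_simps)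
  also have "\<dots> = mat 1 + (outer a b - msc t (outer a b) - msc t (msc (dt b a) (outer a b)))"
    by (simp add: algebra_simps msc_add msc_diff)
  finally show "(mat 1 + outer a b) ** (mat 1 - msc t (outer a b)) = (mat 1 :: 'a::field^'d^'d)"
    using e by simp
  have "(mat 1 - msc t (outer a b)) ** (mat 1 + outer a b) =
     mat 1 - msc t (outer a b) + (outer a b - msc t (msc (dt b a) (outer a b)))"
    by (simp add: matrix_add_ldistrib mm_add_r mm_diff_l mm_diff_r mm_smul_l mm_smul_r outer_outer msc_add msc_diff algebra_simps)
  also have "\<dots> = mat 1 + (outer a b - msc t (outer a b) - msc t (msc (dt b a) (outer a b)))"
    by (simp add: algebra_simps msc_add msc_diff)
  finally show "(mat 1 - msc t (outer a b)) ** (mat 1 + outer a b) = (mat 1 :: 'a::field^'d^'d)"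
    using e by simp
qed

lemma mv_mat1_outer: "(mat 1 + outer a b) *v c = c + dt b c *s (a::'a::field^'d)"
  by (simp add: matrix_vector_mult_add_rdistrib outer_mv)
lemma vm_mat1_outer: "c v* (mat 1 + outer a b) = c + dt c a *s (b::'a::field^'d)"
  by (simp add: vector_matrix_mult_add_rdistrib vm_outer)
lemma mv_mat1_outer': "(mat 1 - msc t (outer a b)) *v c = c - (t * dt b c) *s (a::'a::field^'d)"
  by (simp add: matrix_vector_mult_diff_rdistrib msc_mv outer_mv vec_eq_iff)
lemma vm_mat1_outer': "c v* (mat 1 - msc t (outer a b)) = c - (t * dt c a) *s (b::'a::field^'d)"
  by (simp add: vector_matrix_mult_diff_rdistrib vm_msc vm_outer vec_eq_iff)

definition reach :: "'a::field^'d \<Rightarrow> 'a^'d \<Rightarrow> 'd \<Rightarrow> 'd \<Rightarrow> bool" where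
  "reach u v x y \<longleftrightarrow> (\<exists>P Pv k. P ** Pv = mat 1 \<and> Pv ** P = mat 1 \<and> k \<noteq> 0 \<and> P *v ax x = u \<and> v v* P = k *s ax y)"

lemma reach_conj:
  assumes "T ** Tv = mat 1" "Tv ** T = mat 1" "reach (T *v u) (v v* Tv) x y"
  shows "reach u v x y"
proof -
  obtain P Pv k where P: "P ** Pv = mat 1" "Pv ** P = mat 1" "k \<noteq> 0" "P *v ax x = T *v u"
    "(v v* Tv) v* P = k *s ax y" using assms(3) unfolding reach_def by blast
  have "(Tv ** P) ** (Pv ** T) = mat 1"
    by (metis P(1) assms(2) matrix_mul_assoc matrix_mul_rid)
  moreover have "(Pv ** T) ** (Tv ** P) = mat 1"
    by (metis P(2) assms(1) matrix_mul_assoc matrix_mul_rid)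
  moreover have "(Tv ** P) *v ax x = u"
    by (metis P(4) assms(2) matrix_vector_mul_assoc matrix_vector_mul_lid)
  moreover have "v v* (Tv ** P) = k *s ax y"
    by (metis P(5) vector_matrix_mul_assoc)
  ultimately show ?thesis unfolding reach_def using P(3) by blast
qed




lemma inv_pair_dt:
  assumes "Tv ** T = (mat 1::'a::field^'d^'d)"
  shows "dt (v v* Tv) (T *v u) = dt v u"
  by (metis assms dt_mv matrix_vector_mul_assoc matrix_vector_mul_lid)

lemma inv_pair_nz:
  assumes "Tv ** T = (mat 1::'a::field^'d^'d)" "v \<noteq> 0"
  shows "v v* Tv \<noteq> 0"
  by (metis assms vector_matrix_mul_assoc vector_matrix_mul_rid vector_matrix_mult_0)

lemma reach_S1:
  assumes xy: "x \<noteq> y" and ux: "u$x \<noteq> 0" and vy: "v$y \<noteq> 0" and vu: "dt v u = 0"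
  shows "reach u (v::'a::field^'d) x y"
proof -
  define a1 where "a1 = u - ax x"
  define t1 where "t1 = 1 / u$x"
  have t1: "t1 * (1 + dt (ax x) a1) = 1" unfolding t1_def a1_def using ux by simp
  define P1 where "P1 = mat 1 + outer a1 (ax x)"
  define Pv1 where "Pv1 = mat 1 - msc t1 (outer a1 (ax x))"
  have i1: "P1 ** Pv1 = mat 1" "Pv1 ** P1 = mat 1" unfolding P1_def Pv1_def using sm_inverse[OF t1] by auto
  have P1x: "P1 *v ax x = u" unfolding P1_def a1_def
    by (simp add: mv_mat1_outer)
  define v1 where "v1 = v v* P1"
  have v1: "v1 = v - v$x *s ax x" unfolding v1_def P1_def a1_def
    by (simp add: vm_mat1_outer dt_simps vu)
  have v1y: "v1$y = v$y" and v1x: "v1$x = 0" using xy by (simp_all add: v1 axis_def)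
  define g where "g = (1 / v$y) *s (v1 - v$y *s ax y)"
  define a2 where "a2 = (-1) *s (ax y :: 'a^'d)"
  have t2: "1 * (1 + dt g a2) = 1"
    unfolding g_def a2_def using vy by (simp add: dt_simps v1y)
  define P2 where "P2 = mat 1 + outer a2 g"
  define Pv2 where "Pv2 = mat 1 - msc 1 (outer a2 g)"
  have i2: "P2 ** Pv2 = mat 1" "Pv2 ** P2 = mat 1" unfolding P2_def Pv2_def using sm_inverse[OF t2] by auto
  have gx: "g$x = 0" unfolding g_def using xy v1x by (simp add: axis_def)
  have P2x: "P2 *v ax x = ax x" unfolding P2_def by (simp add: mv_mat1_outer gx dt_comm)
  have v1P2: "v1 v* P2 = v$y *s ax y"
    unfolding P2_def using vy by (simp add: vm_mat1_outer a2_def g_def dt_simps v1y)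
  have "(P1 ** P2) ** (Pv2 ** Pv1) = mat 1"
    by (metis i1(1) i2(1) matrix_mul_assoc matrix_mul_rid)
  moreover have "(Pv2 ** Pv1) ** (P1 ** P2) = mat 1"
    by (metis i1(2) i2(2) matrix_mul_assoc matrix_mul_rid)
  moreover have "(P1 ** P2) *v ax x = u"
    by (metis P1x P2x matrix_vector_mul_assoc)
  moreover have "v v* (P1 ** P2) = v$y *s ax y"
    by (metis v1P2 v1_def vector_matrix_mul_assoc)
  ultimately show ?thesis unfolding reach_def using vy by blast
qed

lemma ax_nth: "(axis i (1::'a::field) :: 'a^'d) $ j = (if j = i then 1 else 0)"
  by (simp add: axis_def)
lemma mv_mat1_outer2: "(mat 1 - outer a b) *v c = c - dt b c *s (a::'a::field^'d)"
  by (simp add: matrix_vector_mult_diff_rdistrib outer_mv)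

lemma dt_single:
  assumes "\<forall>q. q \<noteq> x \<longrightarrow> v$q = 0"
  shows "dt v u = v$x * u$x"
proof -
  have "dt v u = (\<Sum>i\<in>UNIV. if i = x then v$x * u$x else 0)"
    unfolding dt_def by (rule sum.cong) (use assms in auto)
  then show ?thesis by simp
qed

lemma reach_S2:
  assumes xy: "x \<noteq> y" and ux: "u$x \<noteq> 0" and v0: "v \<noteq> 0" and vu: "dt v u = 0"
  shows "reach u (v::'a::field^'d) x y"
proof (cases "v$y = 0")
  case False
  then show ?thesis using reach_S1 assms by blast
next
  case True
  obtain q where q: "q \<noteq> x" "v$q \<noteq> 0"
  proof (rule ccontr)
    assume "\<not> thesis"
    then have "\<forall>q. q \<noteq> x \<longrightarrow> v$q = 0" using that by blast
    moreover then have "v$x = 0" using dt_single[of x v u] vu ux by simp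
    ultimately have "v = 0" by (metis vec_eq_iff zero_index)
    with v0 show False by simp
  qed
  have qy: "q \<noteq> y" using q True by auto
  have t: "1 * (1 + dt (ax y) (ax q)) = (1::'a)" using qy by (simp add: ax_nth)
  define Tv where "Tv = mat 1 + outer (ax q) (ax y :: 'a^'d)"
  define T where "T = mat 1 - msc 1 (outer (ax q) (ax y :: 'a^'d))"
  have i: "Tv ** T = mat 1" "T ** Tv = mat 1" unfolding T_def Tv_def using sm_inverse[OF t] by auto
  have "(T *v u)$x = u$x" unfolding T_def using q(1) by (simp add: mv_mat1_outer2 ax_nth)
  moreover have "(v v* Tv)$y = v$q" unfolding Tv_def using True by (simp add: vm_mat1_outer ax_nth)
  moreover have "dt (v v* Tv) (T *v u) = 0" using inv_pair_dt[OF i(1)] vu by simp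
  ultimately have "reach (T *v u) (v v* Tv) x y" using reach_S1[OF xy, of "T *v u" "v v* Tv"] ux q(2) by metis
  then show ?thesis using reach_conj[OF i(2) i(1)] by blast
qed

lemma reach_S3:
  assumes xy: "x \<noteq> y" and u0: "u \<noteq> 0" and v0: "v \<noteq> 0" and vu: "dt v u = 0"
  shows "reach u (v::'a::field^'d) x y"
proof (cases "u$x = 0")
  case False
  then show ?thesis using reach_S2 assms by blast
next
  case True
  obtain p where p: "u$p \<noteq> 0" using u0 by (metis vec_eq_iff zero_index)
  have px: "p \<noteq> x" using p True by auto
  have t: "1 * (1 + dt (ax p) (ax x)) = (1::'a)" using px by (simp add: ax_nth)
  define T where "T = mat 1 + outer (ax x) (ax p :: 'a^'d)"
  define Tv where "Tv = mat 1 - msc 1 (outer (ax x) (ax p :: 'a^'d))"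
  have i: "T ** Tv = mat 1" "Tv ** T = mat 1" unfolding T_def Tv_def using sm_inverse[OF t] by auto
  have "(T *v u)$x = u$p" unfolding T_def using True by (simp add: mv_mat1_outer ax_nth)
  moreover have "v v* Tv \<noteq> 0" using inv_pair_nz[OF i(2) v0] .
  moreover have "dt (v v* Tv) (T *v u) = 0" using inv_pair_dt[OF i(2)] vu by simp
  ultimately have "reach (T *v u) (v v* Tv) x y" using reach_S2[OF xy, of "T *v u" "v v* Tv"] p by metis
  then show ?thesis using reach_conj[OF i(1) i(2)] by blast
qed




lemma vm_smul: "(k *s w) v* (M::'a::field^'d^'d) = k *s (w v* M)"
  by (simp add: vec_eq_iff vector_matrix_mult_def sum_distrib_left mult_ac)

lemma good_zero: "good a1 a2 a3 a4 a5 a6 0"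
  unfolding good_def Qf_def Bf_def by simp

lemma good_outer:
  assumes ident: "\<forall>\<zeta> :: nat \<Rightarrow> 'a::field^'d^'d.
      (let F = mlpoly_eval n c \<zeta> in
        a1 ** F ** F + a2 ** F ** a3 ** F + F ** a5 ** F ** a6 + F ** a4 ** F
          - a5 ** F ** F ** a6 = 0)"
    and z0: "(mlpoly_eval n c \<zeta>0 :: 'a::field^'d^'d) = msc k0 (em x y)" and xy: "x \<noteq> y" and k0: "k0 \<noteq> 0"
    and vu: "dt v u = 0"
  shows "good a1 a2 a3 a4 a5 a6 (outer u v)"
proof (cases "u = 0 \<or> v = 0")
  case True
  then show ?thesis using good_zero by auto
next
  case False
  then obtain P Pv k where P: "P ** Pv = mat 1" "Pv ** P = mat 1" "k \<noteq> 0" "P *v ax x = u" "v v* P = k *s ax y"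
    using reach_S3[OF xy _ _ vu] unfolding reach_def by blast
  have vy: "ax y v* Pv = (1/k) *s v"
  proof -
    have "v = (v v* P) v* Pv" by (metis P(1) vector_matrix_mul_assoc vector_matrix_mul_rid)
    also have "\<dots> = k *s (ax y v* Pv)" by (simp add: P(5) vm_smul)
    finally show ?thesis using P(3) by (simp add: vec_eq_iff)
  qed
  have "good a1 a2 a3 a4 a5 a6 (mlpoly_eval n c (\<lambda>k. P ** \<zeta>0 k ** Pv))"
    by (rule good_eval[OF ident])
  moreover have "mlpoly_eval n c (\<lambda>k. P ** \<zeta>0 k ** Pv) = msc (k0 * (1/k)) (outer u v)"
    unfolding f_conj[OF P(2) P(1)] z0
    by (simp add: mm_smul_l mm_smul_r em_outer mm_outer outer_mm P(4) vy outer_smul2 msc_msc)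
  ultimately show ?thesis using good_scale k0 P(3) by (metis divide_eq_0_iff mult_eq_0_iff one_neq_zero)
qed

lemma Q_outer:
  assumes vu: "dt v u = 0"
  shows "Qf a1 a2 a3 a4 a5 a6 (outer u v) = msc (dt v (a3 *v u)) (outer (a2 *v u) v)
     + msc (dt v (a5 *v u)) (outer u (v v* a6)) + msc (dt v (a4 *v u)) (outer u v)"
  unfolding Qf_def using vu
  by (simp add: mm_outer outer_mm vm_outer outer_mv outer_smul1 outer_smul2 mm_smul_l mm_smul_r dt_mv msc_msc)

lemmas osimps = mm_outer outer_mm vm_outer outer_mv outer_smul1 outer_smul2 mm_smul_l mm_smul_r msc_msc
  outer_add1 outer_add2 outer_diff1 outer_diff2 matrix_add_ldistrib mm_add_r mm_diff_l mm_diff_r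
  msc_add msc_diff msc_mv matrix_vector_mult_add_rdistrib matrix_vector_mult_diff_rdistrib dt_simps dt_mv

lemma ex_dt1: "(v::'a::field^'d) \<noteq> 0 \<Longrightarrow> \<exists>x. dt v x = 1"
proof -
  assume "v \<noteq> 0"
  then obtain i where "v$i \<noteq> 0" by (metis vec_eq_iff zero_index)
  then have "dt v ((1 / v$i) *s ax i) = 1" by (simp add: dt_simps)
  then show ?thesis by blast
qed

context
  fixes a1 a2 a3 a4 a5 a6 :: "'a::field^'d^'d"
  assumes G: "\<And>u v. dt v u = 0 \<Longrightarrow> good a1 a2 a3 a4 a5 a6 (outer u v)"
begin

lemma derive_A:
  assumes vu: "dt v u = 0" and yu: "dt y u = 0"
  shows "dt v (a3 *v u) * dt y (a2 *v u) = 0"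
proof (cases "v = 0")
  case True
  then show ?thesis by simp
next
  case False
  then obtain x0 where x0: "dt v x0 = 1" using ex_dt1 by blast
  have "Qf a1 a2 a3 a4 a5 a6 (outer u v) = 0" using G[OF vu] unfolding good_def by blast
  then have "dt y (Qf a1 a2 a3 a4 a5 a6 (outer u v) *v x0) = 0" by simp
  then show ?thesis unfolding Q_outer[OF vu] using x0 yu by (simp add: osimps)
qed

lemma derive_A2:
  assumes vu: "dt v u = 0" and vx: "dt v x = 0"
  shows "dt v (a5 *v u) * dt v (a6 *v x) = 0"
proof (cases "u = 0")
  case True
  then show ?thesis by simp
next
  case False
  then obtain z where z: "dt u z = 1" using ex_dt1 by blast
  have "Qf a1 a2 a3 a4 a5 a6 (outer u v) = 0" using G[OF vu] unfolding good_def by blast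
  then have "dt z (Qf a1 a2 a3 a4 a5 a6 (outer u v) *v x) = 0" by simp
  then show ?thesis unfolding Q_outer[OF vu] using z vx by (simp add: osimps dt_comm[of z u])
qed

lemma derive_b:
  assumes vu: "dt v u = 0" and zw: "dt z w = 0" and vw: "dt v w = 1" and zu: "dt z u = 1"
  shows "dt v (a2 *v u) * (dt v (a3 *v w) - dt z (a3 *v u)) + dt v (a3 *v u) * (dt v (a2 *v w) - dt z (a2 *v u)) = 0"
proof -
  let ?N = "outer u v" and ?H = "outer w v - outer u z"
  have H: "outer w z ** ?N - ?N ** outer w z = ?H"
    using vw zu by (simp add: outer_outer)
  have B0: "Bf a1 a2 a3 a4 a5 a6 ?N ?H = 0" and Q0: "Qf a1 a2 a3 a4 a5 a6 ?N = 0"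
    using G[OF vu] unfolding good_def H[symmetric] by blast+
  have "dt v (Bf a1 a2 a3 a4 a5 a6 ?N ?H *v w) - dt z (Qf a1 a2 a3 a4 a5 a6 ?N *v w) = 0"
    using B0 Q0 by simp
  then show ?thesis unfolding Bf_def Qf_def using vu zw vw zu
    by (simp add: osimps algebra_simps)
qed

lemma derive_b2:
  assumes vu: "dt v u = 0" and zw: "dt z w = 0" and vw: "dt v w = 1" and zu: "dt z u = 1"
  shows "dt v (a6 *v u) * (dt v (a5 *v w) - dt z (a5 *v u)) + dt v (a5 *v u) * (dt v (a6 *v w) - dt z (a6 *v u)) = 0"
proof -
  let ?N = "outer u v" and ?H = "outer w v - outer u z"
  have H: "outer w z ** ?N - ?N ** outer w z = ?H"
    using vw zu by (simp add: outer_outer)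
  have B0: "Bf a1 a2 a3 a4 a5 a6 ?N ?H = 0" and Q0: "Qf a1 a2 a3 a4 a5 a6 ?N = 0"
    using G[OF vu] unfolding good_def H[symmetric] by blast+
  have "dt z (Bf a1 a2 a3 a4 a5 a6 ?N ?H *v u) + dt z (Qf a1 a2 a3 a4 a5 a6 ?N *v w) = 0"
    using B0 Q0 by simp
  then show ?thesis unfolding Bf_def Qf_def using vu zw vw zu
    by (simp add: osimps algebra_simps)
qed

end




lemma perp:
  assumes "\<not> (\<exists>c. x = c *s (u::'a::field^'d))"
  shows "\<exists>y. dt y u = 0 \<and> dt y x \<noteq> 0"
proof (cases "u = 0")
  case True
  then have "x \<noteq> 0" using assms by (metis vector_smult_rzero)
  then obtain i where "x$i \<noteq> 0" by (metis vec_eq_iff zero_index)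
  then show ?thesis using True by (intro exI[of _ "ax i"]) simp
next
  case False
  then obtain p where p: "u$p \<noteq> 0" by (metis vec_eq_iff zero_index)
  have "\<exists>q. u$p * x$q - u$q * x$p \<noteq> 0"
  proof (rule ccontr)
    assume "\<not> ?thesis"
    then have eq: "u$p * x$q = u$q * x$p" for q by auto
    define c where "c = x$p / u$p"
    have "\<forall>q. x$q = c * u$q"
    proof
      fix q
      have "x$q * u$p = x$p * u$q" using eq[of q] by (metis mult.commute)
      with p show "x$q = c * u$q" unfolding c_def by (simp add: field_simps)
    qed
    then have "x = c *s u" by (simp add: vec_eq_iff)
    then show False using assms by blast
  qed
  then obtain q where q: "u$p * x$q - u$q * x$p \<noteq> 0" by blast
  have "dt (u$p *s ax q - u$q *s ax p) u = u$p * u$q - u$q * u$p" by (simp add: dt_simps)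
  also have "\<dots> = 0" by simp
  finally have 1: "dt (u$p *s ax q - u$q *s ax p) u = 0" .
  have "dt (u$p *s ax q - u$q *s ax p) x = u$p * x$q - u$q * x$p" by (simp add: dt_simps)
  with 1 q show ?thesis by metis
qed

lemma perp':
  assumes "\<And>y. dt y (u::'a::field^'d) = 0 \<Longrightarrow> dt y x = 0"
  shows "\<exists>c. x = c *s u"
proof (rule ccontr)
  assume "\<not> (\<exists>c. x = c *s u)"
  from perp[OF this] obtain y where "dt y u = 0" "dt y x \<noteq> 0" by blast
  with assms show False by blast
qed

lemma mv_ax: "((M::'a::field^'d^'d) *v ax t) $ r = M$r$t"
proof -
  have "(M *v ax t) $ r = (\<Sum>j\<in>UNIV. M$r$j * ax t $ j)"
    by (simp add: matrix_vector_mult_def)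
  also have "\<dots> = (\<Sum>j\<in>UNIV. if j = t then M$r$t else 0)"
    by (rule sum.cong) (auto simp: ax_nth)
  finally show ?thesis by simp
qed

lemma mv_smul: "(X::'a::field^'d^'d) *v (k *s w) = k *s (X *v w)"
  by (simp add: vec_eq_iff matrix_vector_mult_def sum_distrib_left mult_ac)

lemma nonscalar_eig:
  assumes "\<not> scalar_matrix (M::'a::field^'d^'d)"
  shows "\<exists>u. \<not> (\<exists>c. M *v u = c *s u)"
proof (rule ccontr)
  assume "\<not> ?thesis"
  then have E: "\<And>u. \<exists>c. M *v u = c *s u" by blast
  have off: "M$r$t = 0" if "r \<noteq> t" for r t
  proof -
    obtain c where "M *v ax t = c *s ax t" using E by blast
    then have "(M *v ax t) $ r = (c *s ax t) $ r" by simp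
    then show ?thesis using that by (simp add: mv_ax ax_nth)
  qed
  have diag: "M$i$i = M$j$j" for i j
  proof (cases "i = j")
    case False
    obtain c where c: "M *v (ax i + ax j) = c *s (ax i + ax j)" using E by blast
    have "(M *v (ax i + ax j)) $ i = (c *s (ax i + ax j)) $ i"
         "(M *v (ax i + ax j)) $ j = (c *s (ax i + ax j)) $ j" using c by simp_all
    then show ?thesis using False off[of i j] off[of j i]
      by (simp add: matrix_vector_right_distrib mv_ax ax_nth)
  qed simp
  have "M = mat (M $ undefined $ undefined)"
    unfolding vec_eq_iff mat_def using off diag by auto
  then show False using assms unfolding scalar_matrix_def by blast
qed

context
  fixes X Y :: "'a::field^'d^'d"
  assumes HA: "\<And>u v y. dt v u = 0 \<Longrightarrow> dt y u = 0 \<Longrightarrow> dt v (Y *v u) * dt y (X *v u) = 0"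
    and Hb: "\<And>u v w z. dt v u = 0 \<Longrightarrow> dt z w = 0 \<Longrightarrow> dt v w = 1 \<Longrightarrow> dt z u = 1 \<Longrightarrow>
      dt v (X *v u) * (dt v (Y *v w) - dt z (Y *v u)) + dt v (Y *v u) * (dt v (X *v w) - dt z (X *v u)) = 0"
begin

lemma keyL:
  assumes nY: "\<not> (\<exists>c. Y *v u = c *s u)"
  shows "\<exists>l. X *v u = l *s u \<and> (\<forall>w. \<exists>c. X *v w - l *s w = c *s u)"
proof -
  have u0: "u \<noteq> 0" using nY by (metis matrix_vector_mult_0_right vector_smult_rzero)
  obtain v0 where v0: "dt v0 u = 0" "dt v0 (Y *v u) \<noteq> 0" using perp[OF nY] by blast
  have "\<exists>l. X *v u = l *s u"
    using HA[OF v0(1)] v0(2) by (intro perp') auto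
  then obtain l where l: "X *v u = l *s u" by blast
  have good: "dt v (X *v w) = l * dt v w" if v: "dt v u = 0" "dt v (Y *v u) \<noteq> 0" for v w
  proof -
    have vnz: "v \<noteq> 0" using v(2) by auto
    have one: "dt v (X *v w1) = l" if w1: "dt v w1 = 1" for w1
    proof -
      have "\<not> (\<exists>c. u = c *s w1)"
      proof
        assume "\<exists>c. u = c *s w1"
        then obtain c where "u = c *s w1" by blast
        then have "dt v u = c" using w1 by (simp add: dt_simps)
        then have "c = 0" using v(1) by simp
        then show False using u0 \<open>u = c *s w1\<close> by simp
      qed
      from perp[OF this] obtain z' where z': "dt z' w1 = 0" "dt z' u \<noteq> 0" by blast
      define z where "z = (1 / dt z' u) *s z'"
      have z: "dt z w1 = 0" "dt z u = 1" using z' by (simp_all add: z_def dt_simps)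
      have "dt v (X *v u) * (dt v (Y *v w1) - dt z (Y *v u)) + dt v (Y *v u) * (dt v (X *v w1) - dt z (X *v u)) = 0"
        by (rule Hb[OF v(1) z(1) w1 z(2)])
      moreover have "dt v (X *v u) = 0" "dt z (X *v u) = l" using l v(1) z(2) by (simp_all add: dt_simps)
      ultimately show ?thesis using v(2) by simp
    qed
    obtain w0 where w0: "dt v w0 = 1" using ex_dt1[OF vnz] by blast
    have "dt v (w + (1 - dt v w) *s w0) = 1" using w0 by (simp add: dt_simps)
    then have A: "dt v (X *v (w + (1 - dt v w) *s w0)) = l" by (rule one)
    have e1: "dt v (X *v (w + (1 - dt v w) *s w0)) = dt v (X *v w) + (1 - dt v w) * dt v (X *v w0)"
      by (simp only: matrix_vector_right_distrib mv_smul dt_add2 dt_smul2)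
    have "dt v (X *v w) + (1 - dt v w) * l = l" using A e1 one[OF w0] by metis
    then show ?thesis by (simp add: algebra_simps)
  qed
  have all: "dt v (X *v w) = l * dt v w" if v: "dt v u = 0" for v w
  proof (cases "dt v (Y *v u) = 0")
    case False
    then show ?thesis using good v by blast
  next
    case True
    have "dt (v + v0) u = 0" "dt (v + v0) (Y *v u) \<noteq> 0" using v v0 True by (simp_all add: dt_simps)
    then have "dt (v + v0) (X *v w) = l * dt (v + v0) w" by (rule good)
    then show ?thesis using good[OF v0] by (simp add: dt_simps algebra_simps)
  qed
  have "\<exists>c. X *v w - l *s w = c *s u" for w
  proof (rule perp')
    fix y assume "dt y u = 0"
    then show "dt y (X *v w - l *s w) = 0" using all by (simp add: dt_simps)
  qed
  then show ?thesis using l by blast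
qed

end


lemma abstract:
  fixes X Y :: "'a::field^'d^'d"
  assumes HA: "\<And>u v y. dt v u = 0 \<Longrightarrow> dt y u = 0 \<Longrightarrow> dt v (Y *v u) * dt y (X *v u) = 0"
    and Hb: "\<And>u v w z. dt v u = 0 \<Longrightarrow> dt z w = 0 \<Longrightarrow> dt v w = 1 \<Longrightarrow> dt z u = 1 \<Longrightarrow>
      dt v (X *v u) * (dt v (Y *v w) - dt z (Y *v u)) + dt v (Y *v u) * (dt v (X *v w) - dt z (X *v u)) = 0"
  shows "scalar_matrix X \<or> scalar_matrix Y"
proof (rule ccontr)
  assume "\<not> ?thesis"
  then have nX: "\<not> scalar_matrix X" and nY: "\<not> scalar_matrix Y" by auto
  have HA': "dt v (X *v u) * dt y (Y *v u) = 0" if "dt v u = 0" "dt y u = 0" for u v y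
    using HA[OF that(2) that(1)] by (simp add: mult.commute)
  have Hb': "dt v (Y *v u) * (dt v (X *v w) - dt z (X *v u)) + dt v (X *v u) * (dt v (Y *v w) - dt z (Y *v u)) = 0"
    if "dt v u = 0" "dt z w = 0" "dt v w = 1" "dt z u = 1" for u v w z
    using Hb[OF that] by (simp add: add.commute)
  obtain u where u: "\<not> (\<exists>c. Y *v u = c *s u)" using nonscalar_eig[OF nY] by blast
  obtain l where l: "X *v u = l *s u" and lw: "\<And>w. \<exists>c. X *v w - l *s w = c *s u"
    using keyL[OF HA Hb u] by blast
  obtain u' where u': "\<not> (\<exists>c. X *v u' = c *s u')" using nonscalar_eig[OF nX] by blast
  obtain m where m: "Y *v u' = m *s u'" and mw: "\<And>w. \<exists>c. Y *v w - m *s w = c *s u'"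
    using keyL[where X=Y and Y=X, OF HA' Hb' u'] by blast
  obtain c1 where c1: "X *v u' - l *s u' = c1 *s u" using lw by blast
  obtain c2 where c2: "Y *v u - m *s u = c2 *s u'" using mw by blast
  have Xu': "X *v u' = l *s u' + c1 *s u" using c1 by (simp add: vec_eq_iff algebra_simps)
  have Yu: "Y *v u = m *s u + c2 *s u'" using c2 by (simp add: vec_eq_iff algebra_simps)
  have c1nz: "c1 \<noteq> 0" using u' Xu' by auto
  have c2nz: "c2 \<noteq> 0" using u Yu by auto
  have u0: "u \<noteq> 0" using u by (metis matrix_vector_mult_0_right vector_smult_rzero)
  have indep: "a = 0 \<and> b = 0" if ab: "a *s u + b *s u' = 0" for a b
  proof (cases "b = 0")
    case True
    then show ?thesis using ab u0 by simp
  next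
    case False
    have "u'$i = (- a / b) * u$i" for i
    proof -
      have e: "a * u$i + b * u'$i = 0" using ab by (simp add: vec_eq_iff)
      then have "b * u'$i = - (a * u$i)" by (simp add: add_eq_0_iff2 add.commute)
      then show ?thesis using False by (simp add: field_simps)
    qed
    then have "u' = (- a / b) *s u" by (simp add: vec_eq_iff)
    then have "Y *v u = (m + c2 * (- a / b)) *s u" using Yu by (simp add: vec_eq_iff algebra_simps)
    then show ?thesis using u by blast
  qed
  define p where "p = u + u'"
  have Xp: "X *v p = l *s p + c1 *s u" unfolding p_def
    using l Xu' by (simp add: matrix_vector_right_distrib vec_eq_iff algebra_simps)
  have Yp: "Y *v p = m *s p + c2 *s u'" unfolding p_def
    using m Yu by (simp add: matrix_vector_right_distrib vec_eq_iff algebra_simps)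
  have nYp: "\<not> (\<exists>c. Y *v p = c *s p)"
  proof
    assume "\<exists>c. Y *v p = c *s p"
    then obtain c where c: "Y *v p = c *s p" by blast
    have "(m - c) *s u + (m + c2 - c) *s u' = 0"
      using c Yp unfolding p_def by (simp add: vec_eq_iff algebra_simps)
    from indep[OF this] have "m - c = 0" "m + c2 - c = 0" by blast+
    moreover have "c2 = (m + c2 - c) - (m - c)" by (simp add: algebra_simps)
    ultimately show False using c2nz by simp
  qed
  have nXp: "\<not> (\<exists>c. X *v p = c *s p)"
  proof
    assume "\<exists>c. X *v p = c *s p"
    then obtain c where c: "X *v p = c *s p" by blast
    have "(l + c1 - c) *s u + (l - c) *s u' = 0"
      using c Xp unfolding p_def by (simp add: vec_eq_iff algebra_simps)
    from indep[OF this] have "l + c1 - c = 0" "l - c = 0" by blast+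
    moreover have "c1 = (l + c1 - c) - (l - c)" by (simp add: algebra_simps)
    ultimately show False using c1nz by simp
  qed
  obtain v where v: "dt v p = 0" "dt v (Y *v p) \<noteq> 0" using perp[OF nYp] by blast
  obtain y where y: "dt y p = 0" "dt y (X *v p) \<noteq> 0" using perp[OF nXp] by blast
  from HA[OF v(1) y(1)] v(2) y(2) show False by simp
qed




lemma dt_tr: "dt v (transpose M *v u) = dt u (M *v (v::'a::field^'d))"
  by (simp add: dt_mv dt_comm)

lemma dt_tr2: "dt v (u v* M) = dt u (M *v (v::'a::field^'d))"
  by (simp add: dt_mv dt_comm)

lemma scalar_tr: "scalar_matrix (transpose (M::'a::field^'d^'d)) \<Longrightarrow> scalar_matrix M"
  unfolding scalar_matrix_def by (metis transpose_mat transpose_transpose)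

theorem lemma2:
  fixes c :: "(nat \<Rightarrow> nat) \<Rightarrow> 'a::field"
    and n :: nat
    and a1 a2 a3 a4 a5 a6 :: "'a^'d^'d"
  assumes char: "(2::'a) \<noteq> 0"
    and dim: "CARD('d) \<ge> 2"
    and noncentral: "\<not> central_valued n c TYPE('d)"
    and ident: "\<forall>\<zeta> :: nat \<Rightarrow> 'a^'d^'d.
      (let F = mlpoly_eval n c \<zeta> in
        a1 ** F ** F + a2 ** F ** a3 ** F + F ** a5 ** F ** a6 + F ** a4 ** F
          - a5 ** F ** F ** a6 = 0)"
  shows "(scalar_matrix a2 \<and> scalar_matrix a5) \<or> (scalar_matrix a2 \<and> scalar_matrix a6) \<or>
         (scalar_matrix a3 \<and> scalar_matrix a5) \<or> (scalar_matrix a3 \<and> scalar_matrix a6)"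
proof -
  obtain \<zeta>0 x y k0 where z0: "x \<noteq> y" "k0 \<noteq> 0" "(mlpoly_eval n c \<zeta>0 :: 'a^'d^'d) = msc k0 (em x y)"
    using exists_em[OF noncentral] by blast
  have G: "good a1 a2 a3 a4 a5 a6 (outer u v)" if "dt v u = 0" for u v
    using good_outer[OF ident z0(3) z0(1) z0(2) that] .
  have s23: "scalar_matrix a2 \<or> scalar_matrix a3"
  proof (rule abstract)
    fix u v y :: "'a^'d"
    assume "dt v u = 0" "dt y u = 0"
    then show "dt v (a3 *v u) * dt y (a2 *v u) = 0" using derive_A[OF G] by blast
  next
    fix u v w z :: "'a^'d"
    assume "dt v u = 0" "dt z w = 0" "dt v w = 1" "dt z u = 1"
    then show "dt v (a2 *v u) * (dt v (a3 *v w) - dt z (a3 *v u)) + dt v (a3 *v u) * (dt v (a2 *v w) - dt z (a2 *v u)) = 0"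
      using derive_b[OF G] by blast
  qed
  have s65: "scalar_matrix (transpose a6) \<or> scalar_matrix (transpose a5)"
  proof (rule abstract)
    fix u v y :: "'a^'d"
    assume a: "dt v u = 0" "dt y u = 0"
    have "dt u (a5 *v v) * dt u (a6 *v y) = 0"
      using a by (intro derive_A2[OF G]) (simp_all add: dt_comm)
    then show "dt v (transpose a5 *v u) * dt y (transpose a6 *v u) = 0" by (simp add: dt_tr dt_tr2)
  next
    fix u v w z :: "'a^'d"
    assume a: "dt v u = 0" "dt z w = 0" "dt v w = 1" "dt z u = 1"
    have "dt u (a6 *v v) * (dt u (a5 *v z) - dt w (a5 *v v)) + dt u (a5 *v v) * (dt u (a6 *v z) - dt w (a6 *v v)) = 0"
      using a by (intro derive_b2[OF G]) (simp_all add: dt_comm)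
    then show "dt v (transpose a6 *v u) * (dt v (transpose a5 *v w) - dt z (transpose a5 *v u)) +
        dt v (transpose a5 *v u) * (dt v (transpose a6 *v w) - dt z (transpose a6 *v u)) = 0"
      by (simp add: dt_tr dt_tr2 algebra_simps)
  qed
  then have s56: "scalar_matrix a5 \<or> scalar_matrix a6" using scalar_tr by blast
  from s23 s56 show ?thesis by blast
qed


end
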